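(* For every odd integer $k\ge 3$, the graph $F_k$ is geodetic.
   Context: All graphs are finite, simple and undirected; a graph is geodetic if between any two vertices there is at most one shortest path. For odd $k\ge 3$, $F_k$ is constructed as follows: take two disjoint cycles of length $k$ with vertices $u_1,\dots,u_k$ and $v_1,\dots,v_k$ respectively (in cyclic order), and add: a vertex $b$ adjacent to $u_{(k+1)/2}$ and $v_{(k+1)/2}$; a vertex $s_1$ adjacent to $u_1$ and a vertex $s_2$ adjacent to $u_k$; a vertex $t_1$ adjacent to $v_1$ and a vertex $t_2$ adjacent to $v_k$; and four paths of length three (each with two new internal vertices) joining $s_1$ to $t_1$, $s_1$ to $t_2$, $s_2$ to $t_1$, and $s_2$ to $t_2$. *)

theory Defs
  imports Main
begin

definition is_path :: "'a set \<Rightarrow> ('a \<Rightarrow> 'a \<Rightarrow> bool) \<Rightarrow> 'a list \<Rightarrow> bool" where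
  "is_path VS E xs \<longleftrightarrow> xs \<noteq> [] \<and> set xs \<subseteq> VS \<and> distinct xs \<and>
     (\<forall>i. Suc i < length xs \<longrightarrow> E (xs ! i) (xs ! Suc i))"

definition is_shortest_path :: "'a set \<Rightarrow> ('a \<Rightarrow> 'a \<Rightarrow> bool) \<Rightarrow> 'a \<Rightarrow> 'a \<Rightarrow> 'a list \<Rightarrow> bool" where
  "is_shortest_path VS E x y xs \<longleftrightarrow> is_path VS E xs \<and> hd xs = x \<and> last xs = y \<and>
     (\<forall>ys. is_path VS E ys \<and> hd ys = x \<and> last ys = y \<longrightarrow> length xs \<le> length ys)"

definition geodetic :: "'a set \<Rightarrow> ('a \<Rightarrow> 'a \<Rightarrow> bool) \<Rightarrow> bool" where
  "geodetic VS E \<longleftrightarrow> (\<forall>x\<in>VS. \<forall>y\<in>VS. \<forall>p q.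
     is_shortest_path VS E x y p \<and> is_shortest_path VS E x y q \<longrightarrow> p = q)"

text \<open>Vertices: U i, V i (1 \<le> i \<le> k) on the two k-cycles; B; S1, S2, T1, T2;
and P j 1, P j 2 the two internal vertices of the j-th path of length three,
j = 1: S1--T1, j = 2: S1--T2, j = 3: S2--T1, j = 4: S2--T2.\<close>

datatype fvert = U nat | V nat | B | S1 | S2 | T1 | T2 | P nat nat

definition path_ends :: "(nat \<times> fvert \<times> fvert) set" where
  "path_ends = {(1, S1, T1), (2, S1, T2), (3, S2, T1), (4, S2, T2)}"

definition Fk_verts :: "nat \<Rightarrow> fvert set" where
  "Fk_verts k = {U i | i. 1 \<le> i \<and> i \<le> k} \<union> {V i | i. 1 \<le> i \<and> i \<le> k} \<union>
     {B, S1, S2, T1, T2} \<union> {P j r | j r. j \<in> {1,2,3,4} \<and> r \<in> {1,2}}"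

definition Fk_edges :: "nat \<Rightarrow> (fvert \<times> fvert) set" where
  "Fk_edges k =
     {(U i, U (Suc i)) | i. 1 \<le> i \<and> i < k} \<union> {(U k, U 1)} \<union>
     {(V i, V (Suc i)) | i. 1 \<le> i \<and> i < k} \<union> {(V k, V 1)} \<union>
     {(B, U ((k + 1) div 2)), (B, V ((k + 1) div 2))} \<union>
     {(S1, U 1), (S2, U k), (T1, V 1), (T2, V k)} \<union>
     {(s, P j 1) | j s t. (j, s, t) \<in> path_ends} \<union>
     {(P j 1, P j 2) | j s t. (j, s, t) \<in> path_ends} \<union>
     {(P j 2, t) | j s t. (j, s, t) \<in> path_ends}"

definition Fk_adj :: "nat \<Rightarrow> fvert \<Rightarrow> fvert \<Rightarrow> bool" where
  "Fk_adj k x y \<longleftrightarrow> (x, y) \<in> Fk_edges k \<or> (y, x) \<in> Fk_edges k"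

end

theory Submission
  imports Defs
begin


definition geo_from :: "'a set \<Rightarrow> ('a \<Rightarrow> 'a \<Rightarrow> bool) \<Rightarrow> 'a \<Rightarrow> bool" where
  "geo_from VS E x \<longleftrightarrow> (\<forall>y\<in>VS. \<forall>p q.
     is_shortest_path VS E x y p \<and> is_shortest_path VS E x y q \<longrightarrow> p = q)"

lemma path_le:
  fixes d :: "'a \<Rightarrow> nat"
  assumes L2: "\<forall>y\<in>VS. \<forall>z. E y z \<longrightarrow> d z \<le> d y + 1"
    and P: "is_path VS E p" and ij: "i \<le> j" "j < length p"
  shows "d (p!j) \<le> d (p!i) + (j - i)"
  using ij
proof (induction j)
  case 0 then show ?case by simp
next
  case (Suc j)
  show ?case
  proof (cases "i = Suc j")
    case True then show ?thesis by simp
  next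
    case False
    then have "i \<le> j" using Suc by simp
    with Suc have IH: "d (p!j) \<le> d (p!i) + (j - i)" by simp
    have "E (p!j) (p!Suc j)" using P Suc unfolding is_path_def by blast
    moreover have "p!j \<in> VS" using P Suc unfolding is_path_def by auto
    ultimately have "d (p!Suc j) \<le> d (p!j) + 1" using L2 by blast
    then show ?thesis using IH \<open>i \<le> j\<close> by simp
  qed
qed

lemma path_le0:
  fixes d :: "'a \<Rightarrow> nat"
  assumes L2: "\<forall>y\<in>VS. \<forall>z. E y z \<longrightarrow> d z \<le> d y + 1"
    and P: "is_path VS E p" and h: "hd p = x" and d0: "d x = 0" and j: "j < length p"
  shows "d (p!j) \<le> j"
proof -
  have "p ! 0 = x" using P h unfolding is_path_def by (simp add: hd_conv_nth)
  then show ?thesis using path_le[OF L2 P, of 0 j] j d0 by simp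
qed

lemma path_exists:
  fixes d :: "'a \<Rightarrow> nat"
  assumes sym: "\<forall>a b. E a b \<longrightarrow> E b a"
    and inVS: "\<forall>a b. E a b \<longrightarrow> b \<in> VS"
    and x: "x \<in> VS" and d0: "d x = 0"
    and L2: "\<forall>y\<in>VS. \<forall>z. E y z \<longrightarrow> d z \<le> d y + 1"
    and L3: "\<forall>y\<in>VS. y \<noteq> x \<longrightarrow> (\<exists>z. E y z \<and> d z + 1 = d y)"
  shows "y \<in> VS \<Longrightarrow> d y = n \<Longrightarrow> \<exists>p. is_path VS E p \<and> hd p = x \<and> last p = y \<and> length p = n + 1"
proof (induction n arbitrary: y)
  case 0
  then have "y = x" using L3 by fastforce
  then show ?case using x unfolding is_path_def by (intro exI[of _ "[x]"]) auto
next
  case (Suc n)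
  then have "y \<noteq> x" using d0 by auto
  then obtain z where z: "E y z" "d z + 1 = d y" using L3 Suc by blast
  have zV: "z \<in> VS" using inVS z by blast
  obtain p where p: "is_path VS E p" "hd p = x" "last p = z" "length p = n + 1"
    using Suc.IH[OF zV] z Suc by auto
  have yn: "y \<notin> set p"
  proof
    assume "y \<in> set p"
    then obtain i where "i < length p" "p!i = y" by (auto simp: in_set_conv_nth)
    then have "d y \<le> i" using path_le0[OF L2 p(1) p(2) d0] by auto
    then show False using \<open>i < length p\<close> p(4) Suc by simp
  qed
  have pne: "p \<noteq> []" using p unfolding is_path_def by auto
  have "is_path VS E (p @ [y])"
    unfolding is_path_def
  proof (intro conjI allI impI)
    show "p @ [y] \<noteq> []" by simp
    show "set (p @ [y]) \<subseteq> VS" using p(1) Suc.prems unfolding is_path_def by auto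
    show "distinct (p @ [y])" using p(1) yn unfolding is_path_def by auto
    fix i assume i: "Suc i < length (p @ [y])"
    show "E ((p @ [y]) ! i) ((p @ [y]) ! Suc i)"
    proof (cases "Suc i < length p")
      case True
      then show ?thesis using p(1) unfolding is_path_def by (simp add: nth_append)
    next
      case False
      then have ii: "i = length p - 1" using i by simp
      have "p ! i = z" using p(3) pne ii by (simp add: last_conv_nth)
      then show ?thesis using ii pne z sym by (simp add: nth_append)
    qed
  qed
  then show ?case using p pne by (intro exI[of _ "p @ [y]"]) auto
qed

lemma geo_from_local:
  fixes d :: "'a \<Rightarrow> nat"
  assumes sym: "\<forall>a b. E a b \<longrightarrow> E b a"
    and inVS: "\<forall>a b. E a b \<longrightarrow> b \<in> VS"
    and x: "x \<in> VS" and d0: "d x = 0"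
    and L2: "\<forall>y\<in>VS. \<forall>z. E y z \<longrightarrow> d z \<le> d y + 1"
    and L3: "\<forall>y\<in>VS. y \<noteq> x \<longrightarrow> (\<exists>z. E y z \<and> d z + 1 = d y)"
    and L4: "\<forall>y\<in>VS. \<forall>z z'. E y z \<longrightarrow> E y z' \<longrightarrow> d z + 1 = d y \<longrightarrow> d z' + 1 = d y \<longrightarrow> z = z'"
  shows "geo_from VS E x"
  unfolding geo_from_def
proof (intro ballI allI impI)
  fix y p q assume yV: "y \<in> VS" and pq: "is_shortest_path VS E x y p \<and> is_shortest_path VS E x y q"
  obtain r where r: "is_path VS E r" "hd r = x" "last r = y" "length r = d y + 1"
    using path_exists[OF sym inVS x d0 L2 L3 yV] by blast
  have len: "length s = d y + 1" and dd: "\<forall>i \<le> d y. d (s!i) = i"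
    if s: "is_shortest_path VS E x y s" for s
  proof -
    have sp: "is_path VS E s" "hd s = x" "last s = y" using s unfolding is_shortest_path_def by auto
    have sne: "s \<noteq> []" using sp unfolding is_path_def by auto
    have "length s \<le> d y + 1" using s r unfolding is_shortest_path_def by auto
    moreover have "d (s ! (length s - 1)) \<le> length s - 1"
      using path_le0[OF L2 sp(1) sp(2) d0, of "length s - 1"] sne by simp
    moreover have "s ! (length s - 1) = y" using sp(3) sne by (simp add: last_conv_nth)
    ultimately show ls: "length s = d y + 1" using sne by (cases s) auto
    show "\<forall>i \<le> d y. d (s!i) = i"
    proof (intro allI impI)
      fix i assume i: "i \<le> d y"
      have "d (s!i) \<le> i" using path_le0[OF L2 sp(1) sp(2) d0, of i] ls i by simp
      moreover have "d (s!(d y)) \<le> d (s!i) + (d y - i)" using path_le[OF L2 sp(1), of i "d y"] ls i by simp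
      moreover have "s!(d y) = y" using sp(3) sne ls by (simp add: last_conv_nth)
      ultimately show "d (s!i) = i" using i by simp
    qed
  qed
  have P: "is_path VS E p" "last p = y" and Q: "is_path VS E q" "last q = y"
    using pq unfolding is_shortest_path_def by auto
  have lp: "length p = d y + 1" and lq: "length q = d y + 1" using len pq by auto
  have dp: "\<forall>i \<le> d y. d (p!i) = i" and dq: "\<forall>i \<le> d y. d (q!i) = i" using dd pq by auto
  have "\<forall>t \<le> d y. p ! (d y - t) = q ! (d y - t)"
  proof (intro allI)
    fix t show "t \<le> d y \<longrightarrow> p ! (d y - t) = q ! (d y - t)"
    proof (induction t)
      case 0
      have "p ! d y = last p" using lp by (subst last_conv_nth) auto
      moreover have "q ! d y = last q" using lq by (subst last_conv_nth) auto
      ultimately show ?case using P Q by simp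
    next
      case (Suc t)
      show ?case
      proof
        assume t: "Suc t \<le> d y"
        define i where "i = d y - Suc t"
        have i1: "d y - t = Suc i" using t i_def by simp
        have w: "p ! Suc i = q ! Suc i" using Suc t i1 by simp
        have lt: "Suc i < length p" "Suc i < length q" using lp lq i1 by auto
        have wV: "p ! Suc i \<in> VS" using P lt unfolding is_path_def by (meson nth_mem subsetD)
        have e1: "E (p ! Suc i) (p ! i)" using P lt sym unfolding is_path_def by blast
        have e2: "E (p ! Suc i) (q ! i)" using Q lt sym w unfolding is_path_def by metis
        have le: "i \<le> d y" "Suc i \<le> d y" using lp lt by auto
        have "d (p!i) + 1 = d (p ! Suc i)" using dp le by simp
        moreover have "d (q!i) + 1 = d (p ! Suc i)" using dq dp le by simp
        ultimately have "p ! i = q ! i" using L4 wV e1 e2 by blast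
        then show "p ! (d y - Suc t) = q ! (d y - Suc t)" using i_def by simp
      qed
    qed
  qed
  have "\<forall>i < length p. p ! i = q ! i"
  proof (intro allI impI)
    fix i assume "i < length p"
    then have "i = d y - (d y - i)" "d y - i \<le> d y" using lp by auto
    then show "p ! i = q ! i" using \<open>\<forall>t \<le> d y. p ! (d y - t) = q ! (d y - t)\<close> by metis
  qed
  then show "p = q" using lp lq by (simp add: nth_equalityI)
qed


lemma map_path:
  assumes fV: "\<forall>a\<in>VS. f a \<in> VS" and inv: "\<forall>a\<in>VS. f (f a) = a"
    and hom: "\<forall>a b. E a b \<longrightarrow> E (f a) (f b)" and P: "is_path VS E p"
  shows "is_path VS E (map f p)"
proof -
  have "inj_on f VS" using inv by (metis inj_onI)
  then have "inj_on f (set p)" using P unfolding is_path_def by (meson inj_on_subset)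
  then show ?thesis using P fV hom unfolding is_path_def by (auto simp: distinct_map)
qed

lemma geo_from_auto:
  assumes fV: "\<forall>a\<in>VS. f a \<in> VS" and inv: "\<forall>a\<in>VS. f (f a) = a"
    and hom: "\<forall>a b. E a b \<longrightarrow> E (f a) (f b)" and x: "x \<in> VS" and g: "geo_from VS E x"
  shows "geo_from VS E (f x)"
  unfolding geo_from_def
proof (intro ballI allI impI)
  fix y p q assume y: "y \<in> VS" and pq: "is_shortest_path VS E (f x) y p \<and> is_shortest_path VS E (f x) y q"
  have sh: "is_shortest_path VS E x (f y) (map f s)" if s: "is_shortest_path VS E (f x) y s" for s
  proof -
    have sp: "is_path VS E s" "hd s = f x" "last s = y" using s unfolding is_shortest_path_def by auto
    have sne: "s \<noteq> []" using sp unfolding is_path_def by auto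
    have "is_path VS E (map f s)" using map_path[OF fV inv hom sp(1)] .
    moreover have "hd (map f s) = x" using sp sne inv x by (simp add: hd_map)
    moreover have "last (map f s) = f y" using sp sne by (simp add: last_map)
    moreover have "length (map f s) \<le> length ys" if ys: "is_path VS E ys" "hd ys = x" "last ys = f y" for ys
    proof -
      have yne: "ys \<noteq> []" using ys unfolding is_path_def by auto
      have "is_path VS E (map f ys)" using map_path[OF fV inv hom ys(1)] .
      moreover have "hd (map f ys) = f x" using ys yne by (simp add: hd_map)
      moreover have "last (map f ys) = y" using ys yne inv y by (simp add: last_map)
      ultimately have "length s \<le> length (map f ys)" using s unfolding is_shortest_path_def by blast
      then show ?thesis by simp
    qed
    ultimately show ?thesis unfolding is_shortest_path_def by blast
  qed
  have fy: "f y \<in> VS" using fV y by blast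
  have "map f p = map f q" using g fy sh pq unfolding geo_from_def by blast
  then have "map f (map f p) = map f (map f q)" by simp
  moreover have "map f (map f s) = s" if "is_path VS E s" for s
  proof -
    have "set s \<subseteq> VS" using that unfolding is_path_def by auto
    then show ?thesis using inv by (induction s) auto
  qed
  ultimately show "p = q" using pq unfolding is_shortest_path_def by metis
qed



lemma adj_U:
  assumes "1 \<le> j" "j \<le> 2*n+1" "1 \<le> n"
  shows "Fk_adj (Suc (2*n)) (U j) z \<longleftrightarrow>
    z = (if j = 1 then U (2*n+1) else U (j-1)) \<or> z = (if j = 2*n+1 then U 1 else U (j+1)) \<or>
    (j = 1 \<and> z = S1) \<or> (j = 2*n+1 \<and> z = S2) \<or> (j = n+1 \<and> z = B)"
  using assms unfolding Fk_adj_def Fk_edges_def path_ends_def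
  by (cases z) auto

lemma adj_V:
  assumes "1 \<le> j" "j \<le> 2*n+1" "1 \<le> n"
  shows "Fk_adj (Suc (2*n)) (V j) z \<longleftrightarrow>
    z = (if j = 1 then V (2*n+1) else V (j-1)) \<or> z = (if j = 2*n+1 then V 1 else V (j+1)) \<or>
    (j = 1 \<and> z = T1) \<or> (j = 2*n+1 \<and> z = T2) \<or> (j = n+1 \<and> z = B)"
  using assms unfolding Fk_adj_def Fk_edges_def path_ends_def
  by (cases z) auto

lemma adj_B: "Fk_adj (Suc (2*n)) B z \<longleftrightarrow> z = U (n+1) \<or> z = V (n+1)"
  unfolding Fk_adj_def Fk_edges_def path_ends_def by (cases z) auto
lemma adj_S1: "Fk_adj (Suc (2*n)) S1 z \<longleftrightarrow> z = U 1 \<or> z = P 1 1 \<or> z = P 2 1"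
  unfolding Fk_adj_def Fk_edges_def path_ends_def by (cases z) auto
lemma adj_S2: "Fk_adj (Suc (2*n)) S2 z \<longleftrightarrow> z = U (2*n+1) \<or> z = P 3 1 \<or> z = P 4 1"
  unfolding Fk_adj_def Fk_edges_def path_ends_def by (cases z) auto
lemma adj_T1: "Fk_adj (Suc (2*n)) T1 z \<longleftrightarrow> z = V 1 \<or> z = P 1 2 \<or> z = P 3 2"
  unfolding Fk_adj_def Fk_edges_def path_ends_def by (cases z) auto
lemma adj_T2: "Fk_adj (Suc (2*n)) T2 z \<longleftrightarrow> z = V (2*n+1) \<or> z = P 2 2 \<or> z = P 4 2"
  unfolding Fk_adj_def Fk_edges_def path_ends_def by (cases z) auto
lemma adj_P11: "Fk_adj k (P 1 1) z \<longleftrightarrow> z = S1 \<or> z = P 1 2"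
  unfolding Fk_adj_def Fk_edges_def path_ends_def by (cases z) auto
lemma adj_P12: "Fk_adj k (P 1 2) z \<longleftrightarrow> z = P 1 1 \<or> z = T1"
  unfolding Fk_adj_def Fk_edges_def path_ends_def by (cases z) auto
lemma adj_P21: "Fk_adj k (P 2 1) z \<longleftrightarrow> z = S1 \<or> z = P 2 2"
  unfolding Fk_adj_def Fk_edges_def path_ends_def by (cases z) auto
lemma adj_P22: "Fk_adj k (P 2 2) z \<longleftrightarrow> z = P 2 1 \<or> z = T2"
  unfolding Fk_adj_def Fk_edges_def path_ends_def by (cases z) auto
lemma adj_P31: "Fk_adj k (P 3 1) z \<longleftrightarrow> z = S2 \<or> z = P 3 2"
  unfolding Fk_adj_def Fk_edges_def path_ends_def by (cases z) auto
lemma adj_P32: "Fk_adj k (P 3 2) z \<longleftrightarrow> z = P 3 1 \<or> z = T1"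
  unfolding Fk_adj_def Fk_edges_def path_ends_def by (cases z) auto
lemma adj_P41: "Fk_adj k (P 4 1) z \<longleftrightarrow> z = S2 \<or> z = P 4 2"
  unfolding Fk_adj_def Fk_edges_def path_ends_def by (cases z) auto
lemma adj_P42: "Fk_adj k (P 4 2) z \<longleftrightarrow> z = P 4 1 \<or> z = T2"
  unfolding Fk_adj_def Fk_edges_def path_ends_def by (cases z) auto

lemmas adjs = adj_B adj_S1 adj_S2 adj_T1 adj_T2 adj_P11 adj_P12 adj_P21 adj_P22
  adj_P31 adj_P32 adj_P41 adj_P42

lemma adj_sym: "\<forall>a b. Fk_adj k a b \<longrightarrow> Fk_adj k b a"
  unfolding Fk_adj_def by blast

lemma adj_VS: "1 \<le> k \<Longrightarrow> \<forall>a b. Fk_adj k a b \<longrightarrow> a \<in> Fk_verts k \<and> b \<in> Fk_verts k"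
  unfolding Fk_adj_def Fk_edges_def path_ends_def Fk_verts_def by auto

lemma VS_cases:
  assumes "y \<in> Fk_verts k"
    "\<And>j. 1 \<le> j \<Longrightarrow> j \<le> k \<Longrightarrow> Q (U j)" "\<And>j. 1 \<le> j \<Longrightarrow> j \<le> k \<Longrightarrow> Q (V j)"
    "Q B" "Q S1" "Q S2" "Q T1" "Q T2" "Q (P 1 1)" "Q (P 1 2)" "Q (P 2 1)" "Q (P 2 2)"
    "Q (P 3 1)" "Q (P 3 2)" "Q (P 4 1)" "Q (P 4 2)"
  shows "Q y"
  using assms unfolding Fk_verts_def by auto


definition locy :: "nat \<Rightarrow> fvert \<Rightarrow> (fvert \<Rightarrow> nat) \<Rightarrow> fvert \<Rightarrow> bool" where
  "locy k x d y \<longleftrightarrow> (\<forall>z. Fk_adj k y z \<longrightarrow> d z \<le> d y + 1) \<and>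
     (y \<noteq> x \<longrightarrow> (\<exists>z. Fk_adj k y z \<and> d z + 1 = d y)) \<and>
     (\<forall>z z'. Fk_adj k y z \<longrightarrow> Fk_adj k y z' \<longrightarrow> d z + 1 = d y \<longrightarrow> d z' + 1 = d y \<longrightarrow> z = z')"

lemma geo_from_Fk:
  fixes d :: "fvert \<Rightarrow> nat"
  assumes "1 \<le> k" "x \<in> Fk_verts k" "d x = 0" "\<forall>y\<in>Fk_verts k. locy k x d y"
  shows "geo_from (Fk_verts k) (Fk_adj k) x"
  apply (rule geo_from_local[where d = d])
  using assms adj_sym adj_VS[OF assms(1)] unfolding locy_def by blast+

definition cdi :: "int \<Rightarrow> int \<Rightarrow> int \<Rightarrow> int" where "cdi k a j = min \<bar>a - j\<bar> (k - \<bar>a - j\<bar>)"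
definition edi :: "int \<Rightarrow> int \<Rightarrow> int" where "edi k j = min (j - 1) (k - j)"

definition locyI :: "nat \<Rightarrow> fvert \<Rightarrow> (fvert \<Rightarrow> int) \<Rightarrow> fvert \<Rightarrow> bool" where
  "locyI k x d y \<longleftrightarrow> 0 \<le> d y \<and> (\<forall>z. Fk_adj k y z \<longrightarrow> d z \<le> d y + 1) \<and>
     (y \<noteq> x \<longrightarrow> (\<exists>z. Fk_adj k y z \<and> d z + 1 = d y)) \<and>
     (\<forall>z z'. Fk_adj k y z \<longrightarrow> Fk_adj k y z' \<longrightarrow> d z + 1 = d y \<longrightarrow> d z' + 1 = d y \<longrightarrow> z = z')"

lemma geo_from_FkI:
  fixes d :: "fvert \<Rightarrow> int"
  assumes k: "1 \<le> k" and x: "x \<in> Fk_verts k" and d0: "d x = 0"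
    and H: "\<forall>y\<in>Fk_verts k. locyI k x d y"
  shows "geo_from (Fk_verts k) (Fk_adj k) x"
proof (rule geo_from_Fk[OF k x, where d = "\<lambda>y. nat (d y)"])
  show "nat (d x) = 0" using d0 by simp
  show "\<forall>y\<in>Fk_verts k. locy k x (\<lambda>y. nat (d y)) y"
  proof
    fix y assume y: "y \<in> Fk_verts k"
    have Hy: "locyI k x d y" using H y by blast
    have nz: "0 \<le> d z" if "Fk_adj k y z" for z
    proof -
      have "z \<in> Fk_verts k" using adj_VS[OF k] that by blast
      then show ?thesis using H unfolding locyI_def by blast
    qed
    have ny: "0 \<le> d y" using Hy unfolding locyI_def by blast
    show "locy k x (\<lambda>y. nat (d y)) y"
      unfolding locy_def
    proof (intro conjI allI impI)
      fix z assume "Fk_adj k y z"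
      then show "nat (d z) \<le> nat (d y) + 1" using Hy nz[of z] ny unfolding locyI_def by auto
    next
      assume "y \<noteq> x"
      then obtain z where "Fk_adj k y z" "d z + 1 = d y" using Hy unfolding locyI_def by blast
      then show "\<exists>z. Fk_adj k y z \<and> nat (d z) + 1 = nat (d y)" using nz[of z] by (intro exI[of _ z]) auto
    next
      fix z z' assume a: "Fk_adj k y z" "Fk_adj k y z'" "nat (d z) + 1 = nat (d y)" "nat (d z') + 1 = nat (d y)"
      then have "d z + 1 = d y" "d z' + 1 = d y" using nz[of z] nz[of z'] ny by auto
      then show "z = z'" using Hy a unfolding locyI_def by blast
    qed
  qed
qed

definition locl :: "fvert \<Rightarrow> (fvert \<Rightarrow> int) \<Rightarrow> fvert \<Rightarrow> fvert list \<Rightarrow> bool" where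
  "locl x d y L \<longleftrightarrow> 0 \<le> d y \<and> (\<forall>z\<in>set L. d z \<le> d y + 1) \<and> (y \<noteq> x \<longrightarrow> (\<exists>z\<in>set L. d z + 1 = d y)) \<and>
     (\<forall>z\<in>set L. \<forall>z'\<in>set L. d z + 1 = d y \<longrightarrow> d z' + 1 = d y \<longrightarrow> z = z')"

lemma locl_locy: "(\<And>z. Fk_adj k y z \<longleftrightarrow> z \<in> set L) \<Longrightarrow> locl x d y L \<Longrightarrow> locyI k x d y"
  unfolding locl_def locyI_def by auto

definition nbrU :: "nat \<Rightarrow> nat \<Rightarrow> fvert list" where
  "nbrU n j = [if j = 1 then U (2*n+1) else U (j-1), if j = 2*n+1 then U 1 else U (j+1)] @
    (if j = 1 then [S1] else []) @ (if j = 2*n+1 then [S2] else []) @ (if j = n+1 then [B] else [])"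

definition nbrV :: "nat \<Rightarrow> nat \<Rightarrow> fvert list" where
  "nbrV n j = [if j = 1 then V (2*n+1) else V (j-1), if j = 2*n+1 then V 1 else V (j+1)] @
    (if j = 1 then [T1] else []) @ (if j = 2*n+1 then [T2] else []) @ (if j = n+1 then [B] else [])"

lemma nbrU: "1 \<le> n \<Longrightarrow> 1 \<le> j \<Longrightarrow> j \<le> 2*n+1 \<Longrightarrow> Fk_adj (Suc (2*n)) (U j) z \<longleftrightarrow> z \<in> set (nbrU n j)"
  unfolding nbrU_def by (auto simp add: adj_U)
lemma nbrV: "1 \<le> n \<Longrightarrow> 1 \<le> j \<Longrightarrow> j \<le> 2*n+1 \<Longrightarrow> Fk_adj (Suc (2*n)) (V j) z \<longleftrightarrow> z \<in> set (nbrV n j)"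
  unfolding nbrV_def by (auto simp add: adj_V)

lemma adjL_B: "Fk_adj (Suc (2*n)) B z \<longleftrightarrow> z \<in> set [U (n+1), V (n+1)]"
  using adj_B[of n z] by auto
lemma adjL_S1: "Fk_adj (Suc (2*n)) S1 z \<longleftrightarrow> z \<in> set [U 1, P 1 1, P 2 1]"
  using adj_S1[of n z] by auto
lemma adjL_S2: "Fk_adj (Suc (2*n)) S2 z \<longleftrightarrow> z \<in> set [U (2*n+1), P 3 1, P 4 1]"
  using adj_S2[of n z] by auto
lemma adjL_T1: "Fk_adj (Suc (2*n)) T1 z \<longleftrightarrow> z \<in> set [V 1, P 1 2, P 3 2]"
  using adj_T1[of n z] by auto
lemma adjL_T2: "Fk_adj (Suc (2*n)) T2 z \<longleftrightarrow> z \<in> set [V (2*n+1), P 2 2, P 4 2]"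
  using adj_T2[of n z] by auto
lemma adjL_P11: "Fk_adj (Suc (2*n)) (P 1 1) z \<longleftrightarrow> z \<in> set [S1, P 1 2]"
  using adj_P11[of n z] adj_P11[of _ z] by auto
lemma adjL_P12: "Fk_adj (Suc (2*n)) (P 1 2) z \<longleftrightarrow> z \<in> set [P 1 1, T1]"
  using adj_P12[of n z] adj_P12[of _ z] by auto
lemma adjL_P21: "Fk_adj (Suc (2*n)) (P 2 1) z \<longleftrightarrow> z \<in> set [S1, P 2 2]"
  using adj_P21[of n z] adj_P21[of _ z] by auto
lemma adjL_P22: "Fk_adj (Suc (2*n)) (P 2 2) z \<longleftrightarrow> z \<in> set [P 2 1, T2]"
  using adj_P22[of n z] adj_P22[of _ z] by auto
lemma adjL_P31: "Fk_adj (Suc (2*n)) (P 3 1) z \<longleftrightarrow> z \<in> set [S2, P 3 2]"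
  using adj_P31[of n z] adj_P31[of _ z] by auto
lemma adjL_P32: "Fk_adj (Suc (2*n)) (P 3 2) z \<longleftrightarrow> z \<in> set [P 3 1, T1]"
  using adj_P32[of n z] adj_P32[of _ z] by auto
lemma adjL_P41: "Fk_adj (Suc (2*n)) (P 4 1) z \<longleftrightarrow> z \<in> set [S2, P 4 2]"
  using adj_P41[of n z] adj_P41[of _ z] by auto
lemma adjL_P42: "Fk_adj (Suc (2*n)) (P 4 2) z \<longleftrightarrow> z \<in> set [P 4 1, T2]"
  using adj_P42[of n z] adj_P42[of _ z] by auto

lemma all_locy:
  assumes n: "1 \<le> n"
    and "\<And>j. 1 \<le> j \<Longrightarrow> j \<le> 2*n+1 \<Longrightarrow> locl x d (U j) (nbrU n j)"
    "\<And>j. 1 \<le> j \<Longrightarrow> j \<le> 2*n+1 \<Longrightarrow> locl x d (V j) (nbrV n j)"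
    and lB: "locl x d B [U (n+1), V (n+1)]"
    and lS1: "locl x d S1 [U 1, P 1 1, P 2 1]"
    and lS2: "locl x d S2 [U (2*n+1), P 3 1, P 4 1]"
    and lT1: "locl x d T1 [V 1, P 1 2, P 3 2]"
    and lT2: "locl x d T2 [V (2*n+1), P 2 2, P 4 2]"
    and lP11: "locl x d (P 1 1) [S1, P 1 2]"
    and lP12: "locl x d (P 1 2) [P 1 1, T1]"
    and lP21: "locl x d (P 2 1) [S1, P 2 2]"
    and lP22: "locl x d (P 2 2) [P 2 1, T2]"
    and lP31: "locl x d (P 3 1) [S2, P 3 2]"
    and lP32: "locl x d (P 3 2) [P 3 1, T1]"
    and lP41: "locl x d (P 4 1) [S2, P 4 2]"
    and lP42: "locl x d (P 4 2) [P 4 1, T2]"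
  shows "\<forall>y\<in>Fk_verts (2*n+1). locyI (2*n+1) x d y"
proof
  fix y assume "y \<in> Fk_verts (2*n+1)"
  then show "locyI (2*n+1) x d y"
  proof (rule VS_cases)
    fix j assume "1 \<le> j" "j \<le> 2*n+1"
    then show "locyI (2*n+1) x d (U j)" using assms nbrU[OF n] locl_locy by simp
  next
    fix j assume "1 \<le> j" "j \<le> 2*n+1"
    then show "locyI (2*n+1) x d (V j)" using assms nbrV[OF n] locl_locy by simp
  next
    show "locyI (2*n+1) x d B" using locl_locy[OF adjL_B lB] by simp
  next
    show "locyI (2*n+1) x d S1" using locl_locy[OF adjL_S1 lS1] by simp
  next
    show "locyI (2*n+1) x d S2" using locl_locy[OF adjL_S2 lS2] by simp
  next
    show "locyI (2*n+1) x d T1" using locl_locy[OF adjL_T1 lT1] by simp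
  next
    show "locyI (2*n+1) x d T2" using locl_locy[OF adjL_T2 lT2] by simp
  next
    show "locyI (2*n+1) x d (P 1 1)" using locl_locy[OF adjL_P11 lP11] by simp
  next
    show "locyI (2*n+1) x d (P 1 2)" using locl_locy[OF adjL_P12 lP12] by simp
  next
    show "locyI (2*n+1) x d (P 2 1)" using locl_locy[OF adjL_P21 lP21] by simp
  next
    show "locyI (2*n+1) x d (P 2 2)" using locl_locy[OF adjL_P22 lP22] by simp
  next
    show "locyI (2*n+1) x d (P 3 1)" using locl_locy[OF adjL_P31 lP31] by simp
  next
    show "locyI (2*n+1) x d (P 3 2)" using locl_locy[OF adjL_P32 lP32] by simp
  next
    show "locyI (2*n+1) x d (P 4 1)" using locl_locy[OF adjL_P41 lP41] by simp
  next
    show "locyI (2*n+1) x d (P 4 2)" using locl_locy[OF adjL_P42 lP42] by simp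
  qed
qed

definition DB :: "nat \<Rightarrow> fvert \<Rightarrow> int" where
  "DB n y = (let N = int n in case y of U j \<Rightarrow> 1 + \<bar>int j - (N+1)\<bar> | V j \<Rightarrow> 1 + \<bar>int j - (N+1)\<bar> | B \<Rightarrow> 0
     | P _ _ \<Rightarrow> N + 3 | _ \<Rightarrow> N + 2)"

definition DS1 :: "nat \<Rightarrow> fvert \<Rightarrow> int" where
  "DS1 n y = (let N = int n; K = 2*N+1 in case y of U j \<Rightarrow> 1 + cdi K 1 (int j)
     | V j \<Rightarrow> min (4 + edi K (int j)) (N + 3 + \<bar>int j - (N+1)\<bar>) | B \<Rightarrow> N + 2
     | S1 \<Rightarrow> 0 | S2 \<Rightarrow> 3 | T1 \<Rightarrow> 3 | T2 \<Rightarrow> 3 | P jj r \<Rightarrow> if jj \<le> 2 then int r else 4)"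

definition DP11 :: "nat \<Rightarrow> fvert \<Rightarrow> int" where
  "DP11 n y = (let N = int n; K = 2*N+1 in case y of U j \<Rightarrow> 2 + cdi K 1 (int j)
     | V j \<Rightarrow> min (3 + cdi K 1 (int j)) (N + 4 + \<bar>int j - (N+1)\<bar>) | B \<Rightarrow> N + 3
     | S1 \<Rightarrow> 1 | S2 \<Rightarrow> 4 | T1 \<Rightarrow> 2 | T2 \<Rightarrow> 4
     | P jj r \<Rightarrow> if jj = 1 then int r - 1 else if jj = 2 then int r + 1 else if jj = 3 then 5 - int r else 5)"

definition DP21 :: "nat \<Rightarrow> fvert \<Rightarrow> int" where
  "DP21 n y = (let N = int n; K = 2*N+1 in case y of U j \<Rightarrow> 2 + cdi K 1 (int j)
     | V j \<Rightarrow> min (3 + cdi K K (int j)) (N + 4 + \<bar>int j - (N+1)\<bar>) | B \<Rightarrow> N + 3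
     | S1 \<Rightarrow> 1 | S2 \<Rightarrow> 4 | T1 \<Rightarrow> 4 | T2 \<Rightarrow> 2
     | P jj r \<Rightarrow> if jj = 2 then int r - 1 else if jj = 1 then int r + 1 else if jj = 4 then 5 - int r else 5)"

definition DU :: "nat \<Rightarrow> nat \<Rightarrow> fvert \<Rightarrow> int" where
  "DU n a y = (let N = int n; K = 2*N+1; A = int a; T = min (A+3) (2*N+4-A) in
     case y of U j \<Rightarrow> cdi K A (int j)
     | V j \<Rightarrow> min (A + 4 + edi K (int j)) (N + 3 - A + \<bar>int j - (N+1)\<bar>) | B \<Rightarrow> N + 2 - A
     | S1 \<Rightarrow> A | S2 \<Rightarrow> min (A+1) (2*N+2-A) | T1 \<Rightarrow> T | T2 \<Rightarrow> T
     | P jj r \<Rightarrow> if jj \<le> 2 then A + int r else if r = 1 then min (A+2) (2*N+3-A) else T)"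

lemma jcases:
  fixes j n :: nat
  assumes "1 \<le> j" "j \<le> 2*n+1" "1 \<le> n"
  obtains "j = 1" | "j = n" | "j = n+1" | "j = n+2" | "j = 2*n+1" | "1 < j" "j < n" | "n+2 < j" "j < 2*n+1"
  using assms by linarith

lemma locB:
  assumes n: "1 \<le> n"
  shows "\<forall>y\<in>Fk_verts (2*n+1). locyI (2*n+1) B (DB n) y"
proof (rule all_locy[OF n])
  fix j assume j: "1 \<le> j" "j \<le> 2*n+1"
  show "locl B (DB n) (U j) (nbrU n j)"
    using n 
    apply (cases rule: jcases[OF j n])
    apply (simp_all add: locl_def nbrU_def)
    apply (safe)?
    apply (simp_all add: DB_def cdi_def edi_def min_def abs_if Let_def split: if_splits)?
    apply (arith+)?
    done
next
  fix j assume j: "1 \<le> j" "j \<le> 2*n+1"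
  show "locl B (DB n) (V j) (nbrV n j)"
    using n 
    apply (cases rule: jcases[OF j n])
    apply (simp_all add: locl_def nbrV_def)
    apply (safe)?
    apply (simp_all add: DB_def cdi_def edi_def min_def abs_if Let_def split: if_splits)?
    apply (arith+)?
    done
next
  show "locl B (DB n) B [U (n+1), V (n+1)]"
    using n 
    apply (simp add: locl_def)
    apply (safe)?
    apply (simp_all add: DB_def cdi_def edi_def min_def abs_if Let_def split: if_splits)?
    apply (arith+)?
    done
next
  show "locl B (DB n) S1 [U 1, P 1 1, P 2 1]"
    using n 
    apply (simp add: locl_def)
    apply (safe)?
    apply (simp_all add: DB_def cdi_def edi_def min_def abs_if Let_def split: if_splits)?
    apply (arith+)?
    done
next
  show "locl B (DB n) S2 [U (2*n+1), P 3 1, P 4 1]"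
    using n 
    apply (simp add: locl_def)
    apply (safe)?
    apply (simp_all add: DB_def cdi_def edi_def min_def abs_if Let_def split: if_splits)?
    apply (arith+)?
    done
next
  show "locl B (DB n) T1 [V 1, P 1 2, P 3 2]"
    using n 
    apply (simp add: locl_def)
    apply (safe)?
    apply (simp_all add: DB_def cdi_def edi_def min_def abs_if Let_def split: if_splits)?
    apply (arith+)?
    done
next
  show "locl B (DB n) T2 [V (2*n+1), P 2 2, P 4 2]"
    using n 
    apply (simp add: locl_def)
    apply (safe)?
    apply (simp_all add: DB_def cdi_def edi_def min_def abs_if Let_def split: if_splits)?
    apply (arith+)?
    done
next
  show "locl B (DB n) (P 1 1) [S1, P 1 2]"
    using n 
    apply (simp add: locl_def)
    apply (safe)?
    apply (simp_all add: DB_def cdi_def edi_def min_def abs_if Let_def split: if_splits)?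
    apply (arith+)?
    done
next
  show "locl B (DB n) (P 1 2) [P 1 1, T1]"
    using n 
    apply (simp add: locl_def)
    apply (safe)?
    apply (simp_all add: DB_def cdi_def edi_def min_def abs_if Let_def split: if_splits)?
    apply (arith+)?
    done
next
  show "locl B (DB n) (P 2 1) [S1, P 2 2]"
    using n 
    apply (simp add: locl_def)
    apply (safe)?
    apply (simp_all add: DB_def cdi_def edi_def min_def abs_if Let_def split: if_splits)?
    apply (arith+)?
    done
next
  show "locl B (DB n) (P 2 2) [P 2 1, T2]"
    using n 
    apply (simp add: locl_def)
    apply (safe)?
    apply (simp_all add: DB_def cdi_def edi_def min_def abs_if Let_def split: if_splits)?
    apply (arith+)?
    done
next
  show "locl B (DB n) (P 3 1) [S2, P 3 2]"
    using n 
    apply (simp add: locl_def)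
    apply (safe)?
    apply (simp_all add: DB_def cdi_def edi_def min_def abs_if Let_def split: if_splits)?
    apply (arith+)?
    done
next
  show "locl B (DB n) (P 3 2) [P 3 1, T1]"
    using n 
    apply (simp add: locl_def)
    apply (safe)?
    apply (simp_all add: DB_def cdi_def edi_def min_def abs_if Let_def split: if_splits)?
    apply (arith+)?
    done
next
  show "locl B (DB n) (P 4 1) [S2, P 4 2]"
    using n 
    apply (simp add: locl_def)
    apply (safe)?
    apply (simp_all add: DB_def cdi_def edi_def min_def abs_if Let_def split: if_splits)?
    apply (arith+)?
    done
next
  show "locl B (DB n) (P 4 2) [P 4 1, T2]"
    using n 
    apply (simp add: locl_def)
    apply (safe)?
    apply (simp_all add: DB_def cdi_def edi_def min_def abs_if Let_def split: if_splits)?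
    apply (arith+)?
    done
qed

lemma locS1:
  assumes n: "1 \<le> n"
  shows "\<forall>y\<in>Fk_verts (2*n+1). locyI (2*n+1) S1 (DS1 n) y"
proof (rule all_locy[OF n])
  fix j assume j: "1 \<le> j" "j \<le> 2*n+1"
  show "locl S1 (DS1 n) (U j) (nbrU n j)"
    using n 
    apply (cases rule: jcases[OF j n])
    apply (simp_all add: locl_def nbrU_def)
    apply (safe)?
    apply (simp_all add: DS1_def cdi_def edi_def min_def abs_if Let_def split: if_splits)?
    apply (arith+)?
    done
next
  fix j assume j: "1 \<le> j" "j \<le> 2*n+1"
  show "locl S1 (DS1 n) (V j) (nbrV n j)"
    using n 
    apply (cases rule: jcases[OF j n])
    apply (simp_all add: locl_def nbrV_def)
    apply (safe)?
    apply (simp_all add: DS1_def cdi_def edi_def min_def abs_if Let_def split: if_splits)?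
    apply (arith+)?
    done
next
  show "locl S1 (DS1 n) B [U (n+1), V (n+1)]"
    using n 
    apply (simp add: locl_def)
    apply (safe)?
    apply (simp_all add: DS1_def cdi_def edi_def min_def abs_if Let_def split: if_splits)?
    apply (arith+)?
    done
next
  show "locl S1 (DS1 n) S1 [U 1, P 1 1, P 2 1]"
    using n 
    apply (simp add: locl_def)
    apply (safe)?
    apply (simp_all add: DS1_def cdi_def edi_def min_def abs_if Let_def split: if_splits)?
    apply (arith+)?
    done
next
  show "locl S1 (DS1 n) S2 [U (2*n+1), P 3 1, P 4 1]"
    using n 
    apply (simp add: locl_def)
    apply (safe)?
    apply (simp_all add: DS1_def cdi_def edi_def min_def abs_if Let_def split: if_splits)?
    apply (arith+)?
    done
next
  show "locl S1 (DS1 n) T1 [V 1, P 1 2, P 3 2]"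
    using n 
    apply (simp add: locl_def)
    apply (safe)?
    apply (simp_all add: DS1_def cdi_def edi_def min_def abs_if Let_def split: if_splits)?
    apply (arith+)?
    done
next
  show "locl S1 (DS1 n) T2 [V (2*n+1), P 2 2, P 4 2]"
    using n 
    apply (simp add: locl_def)
    apply (safe)?
    apply (simp_all add: DS1_def cdi_def edi_def min_def abs_if Let_def split: if_splits)?
    apply (arith+)?
    done
next
  show "locl S1 (DS1 n) (P 1 1) [S1, P 1 2]"
    using n 
    apply (simp add: locl_def)
    apply (safe)?
    apply (simp_all add: DS1_def cdi_def edi_def min_def abs_if Let_def split: if_splits)?
    apply (arith+)?
    done
next
  show "locl S1 (DS1 n) (P 1 2) [P 1 1, T1]"
    using n 
    apply (simp add: locl_def)
    apply (safe)?
    apply (simp_all add: DS1_def cdi_def edi_def min_def abs_if Let_def split: if_splits)?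
    apply (arith+)?
    done
next
  show "locl S1 (DS1 n) (P 2 1) [S1, P 2 2]"
    using n 
    apply (simp add: locl_def)
    apply (safe)?
    apply (simp_all add: DS1_def cdi_def edi_def min_def abs_if Let_def split: if_splits)?
    apply (arith+)?
    done
next
  show "locl S1 (DS1 n) (P 2 2) [P 2 1, T2]"
    using n 
    apply (simp add: locl_def)
    apply (safe)?
    apply (simp_all add: DS1_def cdi_def edi_def min_def abs_if Let_def split: if_splits)?
    apply (arith+)?
    done
next
  show "locl S1 (DS1 n) (P 3 1) [S2, P 3 2]"
    using n 
    apply (simp add: locl_def)
    apply (safe)?
    apply (simp_all add: DS1_def cdi_def edi_def min_def abs_if Let_def split: if_splits)?
    apply (arith+)?
    done
next
  show "locl S1 (DS1 n) (P 3 2) [P 3 1, T1]"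
    using n 
    apply (simp add: locl_def)
    apply (safe)?
    apply (simp_all add: DS1_def cdi_def edi_def min_def abs_if Let_def split: if_splits)?
    apply (arith+)?
    done
next
  show "locl S1 (DS1 n) (P 4 1) [S2, P 4 2]"
    using n 
    apply (simp add: locl_def)
    apply (safe)?
    apply (simp_all add: DS1_def cdi_def edi_def min_def abs_if Let_def split: if_splits)?
    apply (arith+)?
    done
next
  show "locl S1 (DS1 n) (P 4 2) [P 4 1, T2]"
    using n 
    apply (simp add: locl_def)
    apply (safe)?
    apply (simp_all add: DS1_def cdi_def edi_def min_def abs_if Let_def split: if_splits)?
    apply (arith+)?
    done
qed

lemma locP11:
  assumes n: "1 \<le> n"
  shows "\<forall>y\<in>Fk_verts (2*n+1). locyI (2*n+1) (P 1 1) (DP11 n) y"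
proof (rule all_locy[OF n])
  fix j assume j: "1 \<le> j" "j \<le> 2*n+1"
  show "locl (P 1 1) (DP11 n) (U j) (nbrU n j)"
    using n 
    apply (cases rule: jcases[OF j n])
    apply (simp_all add: locl_def nbrU_def)
    apply (safe)?
    apply (simp_all add: DP11_def cdi_def edi_def min_def abs_if Let_def split: if_splits)?
    apply (arith+)?
    done
next
  fix j assume j: "1 \<le> j" "j \<le> 2*n+1"
  show "locl (P 1 1) (DP11 n) (V j) (nbrV n j)"
    using n 
    apply (cases rule: jcases[OF j n])
    apply (simp_all add: locl_def nbrV_def)
    apply (safe)?
    apply (simp_all add: DP11_def cdi_def edi_def min_def abs_if Let_def split: if_splits)?
    apply (arith+)?
    done
next
  show "locl (P 1 1) (DP11 n) B [U (n+1), V (n+1)]"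
    using n 
    apply (simp add: locl_def)
    apply (safe)?
    apply (simp_all add: DP11_def cdi_def edi_def min_def abs_if Let_def split: if_splits)?
    apply (arith+)?
    done
next
  show "locl (P 1 1) (DP11 n) S1 [U 1, P 1 1, P 2 1]"
    using n 
    apply (simp add: locl_def)
    apply (safe)?
    apply (simp_all add: DP11_def cdi_def edi_def min_def abs_if Let_def split: if_splits)?
    apply (arith+)?
    done
next
  show "locl (P 1 1) (DP11 n) S2 [U (2*n+1), P 3 1, P 4 1]"
    using n 
    apply (simp add: locl_def)
    apply (safe)?
    apply (simp_all add: DP11_def cdi_def edi_def min_def abs_if Let_def split: if_splits)?
    apply (arith+)?
    done
next
  show "locl (P 1 1) (DP11 n) T1 [V 1, P 1 2, P 3 2]"
    using n 
    apply (simp add: locl_def)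
    apply (safe)?
    apply (simp_all add: DP11_def cdi_def edi_def min_def abs_if Let_def split: if_splits)?
    apply (arith+)?
    done
next
  show "locl (P 1 1) (DP11 n) T2 [V (2*n+1), P 2 2, P 4 2]"
    using n 
    apply (simp add: locl_def)
    apply (safe)?
    apply (simp_all add: DP11_def cdi_def edi_def min_def abs_if Let_def split: if_splits)?
    apply (arith+)?
    done
next
  show "locl (P 1 1) (DP11 n) (P 1 1) [S1, P 1 2]"
    using n 
    apply (simp add: locl_def)
    apply (safe)?
    apply (simp_all add: DP11_def cdi_def edi_def min_def abs_if Let_def split: if_splits)?
    apply (arith+)?
    done
next
  show "locl (P 1 1) (DP11 n) (P 1 2) [P 1 1, T1]"
    using n 
    apply (simp add: locl_def)
    apply (safe)?
    apply (simp_all add: DP11_def cdi_def edi_def min_def abs_if Let_def split: if_splits)?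
    apply (arith+)?
    done
next
  show "locl (P 1 1) (DP11 n) (P 2 1) [S1, P 2 2]"
    using n 
    apply (simp add: locl_def)
    apply (safe)?
    apply (simp_all add: DP11_def cdi_def edi_def min_def abs_if Let_def split: if_splits)?
    apply (arith+)?
    done
next
  show "locl (P 1 1) (DP11 n) (P 2 2) [P 2 1, T2]"
    using n 
    apply (simp add: locl_def)
    apply (safe)?
    apply (simp_all add: DP11_def cdi_def edi_def min_def abs_if Let_def split: if_splits)?
    apply (arith+)?
    done
next
  show "locl (P 1 1) (DP11 n) (P 3 1) [S2, P 3 2]"
    using n 
    apply (simp add: locl_def)
    apply (safe)?
    apply (simp_all add: DP11_def cdi_def edi_def min_def abs_if Let_def split: if_splits)?
    apply (arith+)?
    done
next
  show "locl (P 1 1) (DP11 n) (P 3 2) [P 3 1, T1]"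
    using n 
    apply (simp add: locl_def)
    apply (safe)?
    apply (simp_all add: DP11_def cdi_def edi_def min_def abs_if Let_def split: if_splits)?
    apply (arith+)?
    done
next
  show "locl (P 1 1) (DP11 n) (P 4 1) [S2, P 4 2]"
    using n 
    apply (simp add: locl_def)
    apply (safe)?
    apply (simp_all add: DP11_def cdi_def edi_def min_def abs_if Let_def split: if_splits)?
    apply (arith+)?
    done
next
  show "locl (P 1 1) (DP11 n) (P 4 2) [P 4 1, T2]"
    using n 
    apply (simp add: locl_def)
    apply (safe)?
    apply (simp_all add: DP11_def cdi_def edi_def min_def abs_if Let_def split: if_splits)?
    apply (arith+)?
    done
qed

lemma locP21:
  assumes n: "1 \<le> n"
  shows "\<forall>y\<in>Fk_verts (2*n+1). locyI (2*n+1) (P 2 1) (DP21 n) y"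
proof (rule all_locy[OF n])
  fix j assume j: "1 \<le> j" "j \<le> 2*n+1"
  show "locl (P 2 1) (DP21 n) (U j) (nbrU n j)"
    using n 
    apply (cases rule: jcases[OF j n])
    apply (simp_all add: locl_def nbrU_def)
    apply (safe)?
    apply (simp_all add: DP21_def cdi_def edi_def min_def abs_if Let_def split: if_splits)?
    apply (arith+)?
    done
next
  fix j assume j: "1 \<le> j" "j \<le> 2*n+1"
  show "locl (P 2 1) (DP21 n) (V j) (nbrV n j)"
    using n 
    apply (cases rule: jcases[OF j n])
    apply (simp_all add: locl_def nbrV_def)
    apply (safe)?
    apply (simp_all add: DP21_def cdi_def edi_def min_def abs_if Let_def split: if_splits)?
    apply (arith+)?
    done
next
  show "locl (P 2 1) (DP21 n) B [U (n+1), V (n+1)]"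
    using n 
    apply (simp add: locl_def)
    apply (safe)?
    apply (simp_all add: DP21_def cdi_def edi_def min_def abs_if Let_def split: if_splits)?
    apply (arith+)?
    done
next
  show "locl (P 2 1) (DP21 n) S1 [U 1, P 1 1, P 2 1]"
    using n 
    apply (simp add: locl_def)
    apply (safe)?
    apply (simp_all add: DP21_def cdi_def edi_def min_def abs_if Let_def split: if_splits)?
    apply (arith+)?
    done
next
  show "locl (P 2 1) (DP21 n) S2 [U (2*n+1), P 3 1, P 4 1]"
    using n 
    apply (simp add: locl_def)
    apply (safe)?
    apply (simp_all add: DP21_def cdi_def edi_def min_def abs_if Let_def split: if_splits)?
    apply (arith+)?
    done
next
  show "locl (P 2 1) (DP21 n) T1 [V 1, P 1 2, P 3 2]"
    using n 
    apply (simp add: locl_def)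
    apply (safe)?
    apply (simp_all add: DP21_def cdi_def edi_def min_def abs_if Let_def split: if_splits)?
    apply (arith+)?
    done
next
  show "locl (P 2 1) (DP21 n) T2 [V (2*n+1), P 2 2, P 4 2]"
    using n 
    apply (simp add: locl_def)
    apply (safe)?
    apply (simp_all add: DP21_def cdi_def edi_def min_def abs_if Let_def split: if_splits)?
    apply (arith+)?
    done
next
  show "locl (P 2 1) (DP21 n) (P 1 1) [S1, P 1 2]"
    using n 
    apply (simp add: locl_def)
    apply (safe)?
    apply (simp_all add: DP21_def cdi_def edi_def min_def abs_if Let_def split: if_splits)?
    apply (arith+)?
    done
next
  show "locl (P 2 1) (DP21 n) (P 1 2) [P 1 1, T1]"
    using n 
    apply (simp add: locl_def)
    apply (safe)?
    apply (simp_all add: DP21_def cdi_def edi_def min_def abs_if Let_def split: if_splits)?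
    apply (arith+)?
    done
next
  show "locl (P 2 1) (DP21 n) (P 2 1) [S1, P 2 2]"
    using n 
    apply (simp add: locl_def)
    apply (safe)?
    apply (simp_all add: DP21_def cdi_def edi_def min_def abs_if Let_def split: if_splits)?
    apply (arith+)?
    done
next
  show "locl (P 2 1) (DP21 n) (P 2 2) [P 2 1, T2]"
    using n 
    apply (simp add: locl_def)
    apply (safe)?
    apply (simp_all add: DP21_def cdi_def edi_def min_def abs_if Let_def split: if_splits)?
    apply (arith+)?
    done
next
  show "locl (P 2 1) (DP21 n) (P 3 1) [S2, P 3 2]"
    using n 
    apply (simp add: locl_def)
    apply (safe)?
    apply (simp_all add: DP21_def cdi_def edi_def min_def abs_if Let_def split: if_splits)?
    apply (arith+)?
    done
next
  show "locl (P 2 1) (DP21 n) (P 3 2) [P 3 1, T1]"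
    using n 
    apply (simp add: locl_def)
    apply (safe)?
    apply (simp_all add: DP21_def cdi_def edi_def min_def abs_if Let_def split: if_splits)?
    apply (arith+)?
    done
next
  show "locl (P 2 1) (DP21 n) (P 4 1) [S2, P 4 2]"
    using n 
    apply (simp add: locl_def)
    apply (safe)?
    apply (simp_all add: DP21_def cdi_def edi_def min_def abs_if Let_def split: if_splits)?
    apply (arith+)?
    done
next
  show "locl (P 2 1) (DP21 n) (P 4 2) [P 4 1, T2]"
    using n 
    apply (simp add: locl_def)
    apply (safe)?
    apply (simp_all add: DP21_def cdi_def edi_def min_def abs_if Let_def split: if_splits)?
    apply (arith+)?
    done
qed

lemma locU:
  assumes n: "1 \<le> n" and a: "1 \<le> a" "a \<le> n+1"
  shows "\<forall>y\<in>Fk_verts (2*n+1). locyI (2*n+1) (U a) (DU n a) y"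
proof (rule all_locy[OF n])
  fix j assume j: "1 \<le> j" "j \<le> 2*n+1"
  show "locl (U a) (DU n a) (U j) (nbrU n j)"
    using n a
    apply (cases rule: jcases[OF j n])
    apply (simp_all add: locl_def nbrU_def)
    apply (safe)?
    apply (simp_all add: DU_def cdi_def edi_def min_def abs_if Let_def split: if_splits)?
    apply (arith+)?
    done
next
  fix j assume j: "1 \<le> j" "j \<le> 2*n+1"
  show "locl (U a) (DU n a) (V j) (nbrV n j)"
    using n a
    apply (cases rule: jcases[OF j n])
    apply (simp_all add: locl_def nbrV_def)
    apply (safe)?
    apply (simp_all add: DU_def cdi_def edi_def min_def abs_if Let_def split: if_splits)?
    apply (arith+)?
    done
next
  show "locl (U a) (DU n a) B [U (n+1), V (n+1)]"
    using n a
    apply (simp add: locl_def)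
    apply (safe)?
    apply (simp_all add: DU_def cdi_def edi_def min_def abs_if Let_def split: if_splits)?
    apply (arith+)?
    done
next
  show "locl (U a) (DU n a) S1 [U 1, P 1 1, P 2 1]"
    using n a
    apply (simp add: locl_def)
    apply (safe)?
    apply (simp_all add: DU_def cdi_def edi_def min_def abs_if Let_def split: if_splits)?
    apply (arith+)?
    done
next
  show "locl (U a) (DU n a) S2 [U (2*n+1), P 3 1, P 4 1]"
    using n a
    apply (simp add: locl_def)
    apply (safe)?
    apply (simp_all add: DU_def cdi_def edi_def min_def abs_if Let_def split: if_splits)?
    apply (arith+)?
    done
next
  show "locl (U a) (DU n a) T1 [V 1, P 1 2, P 3 2]"
    using n a
    apply (simp add: locl_def)
    apply (safe)?
    apply (simp_all add: DU_def cdi_def edi_def min_def abs_if Let_def split: if_splits)?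
    apply (arith+)?
    done
next
  show "locl (U a) (DU n a) T2 [V (2*n+1), P 2 2, P 4 2]"
    using n a
    apply (simp add: locl_def)
    apply (safe)?
    apply (simp_all add: DU_def cdi_def edi_def min_def abs_if Let_def split: if_splits)?
    apply (arith+)?
    done
next
  show "locl (U a) (DU n a) (P 1 1) [S1, P 1 2]"
    using n a
    apply (simp add: locl_def)
    apply (safe)?
    apply (simp_all add: DU_def cdi_def edi_def min_def abs_if Let_def split: if_splits)?
    apply (arith+)?
    done
next
  show "locl (U a) (DU n a) (P 1 2) [P 1 1, T1]"
    using n a
    apply (simp add: locl_def)
    apply (safe)?
    apply (simp_all add: DU_def cdi_def edi_def min_def abs_if Let_def split: if_splits)?
    apply (arith+)?
    done
next
  show "locl (U a) (DU n a) (P 2 1) [S1, P 2 2]"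
    using n a
    apply (simp add: locl_def)
    apply (safe)?
    apply (simp_all add: DU_def cdi_def edi_def min_def abs_if Let_def split: if_splits)?
    apply (arith+)?
    done
next
  show "locl (U a) (DU n a) (P 2 2) [P 2 1, T2]"
    using n a
    apply (simp add: locl_def)
    apply (safe)?
    apply (simp_all add: DU_def cdi_def edi_def min_def abs_if Let_def split: if_splits)?
    apply (arith+)?
    done
next
  show "locl (U a) (DU n a) (P 3 1) [S2, P 3 2]"
    using n a
    apply (simp add: locl_def)
    apply (safe)?
    apply (simp_all add: DU_def cdi_def edi_def min_def abs_if Let_def split: if_splits)?
    apply (arith+)?
    done
next
  show "locl (U a) (DU n a) (P 3 2) [P 3 1, T1]"
    using n a
    apply (simp add: locl_def)
    apply (safe)?
    apply (simp_all add: DU_def cdi_def edi_def min_def abs_if Let_def split: if_splits)?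
    apply (arith+)?
    done
next
  show "locl (U a) (DU n a) (P 4 1) [S2, P 4 2]"
    using n a
    apply (simp add: locl_def)
    apply (safe)?
    apply (simp_all add: DU_def cdi_def edi_def min_def abs_if Let_def split: if_splits)?
    apply (arith+)?
    done
next
  show "locl (U a) (DU n a) (P 4 2) [P 4 1, T2]"
    using n a
    apply (simp add: locl_def)
    apply (safe)?
    apply (simp_all add: DU_def cdi_def edi_def min_def abs_if Let_def split: if_splits)?
    apply (arith+)?
    done
qed


lemma edge_cases:
  assumes "(a,b) \<in> Fk_edges k"
  shows "(\<exists>i. 1 \<le> i \<and> i < k \<and> a = U i \<and> b = U (Suc i)) \<or> (a = U k \<and> b = U 1) \<or>
    (\<exists>i. 1 \<le> i \<and> i < k \<and> a = V i \<and> b = V (Suc i)) \<or> (a = V k \<and> b = V 1) \<or>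
    (a = B \<and> b = U ((k+1) div 2)) \<or> (a = B \<and> b = V ((k+1) div 2)) \<or>
    (a = S1 \<and> b = U 1) \<or> (a = S2 \<and> b = U k) \<or> (a = T1 \<and> b = V 1) \<or> (a = T2 \<and> b = V k) \<or>
    (a = S1 \<and> b = P 1 1) \<or> (a = S1 \<and> b = P 2 1) \<or> (a = S2 \<and> b = P 3 1) \<or> (a = S2 \<and> b = P 4 1) \<or>
    (\<exists>j\<in>{1,2,3,4}. a = P j 1 \<and> b = P j 2) \<or>
    (a = P 1 2 \<and> b = T1) \<or> (a = P 2 2 \<and> b = T2) \<or> (a = P 3 2 \<and> b = T1) \<or> (a = P 4 2 \<and> b = T2)"
  using assms unfolding Fk_edges_def path_ends_def
  apply simp
  apply (elim disjE exE conjE)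
  apply simp_all
  done
definition sig :: "nat \<Rightarrow> fvert \<Rightarrow> fvert" where
  "sig n y = (case y of U i \<Rightarrow> U (2*n+2-i) | V i \<Rightarrow> V (2*n+2-i) | B \<Rightarrow> B | S1 \<Rightarrow> S2 | S2 \<Rightarrow> S1
     | T1 \<Rightarrow> T2 | T2 \<Rightarrow> T1 | P j r \<Rightarrow> P (5 - j) r)"

definition tau :: "fvert \<Rightarrow> fvert" where
  "tau y = (case y of U i \<Rightarrow> V i | V i \<Rightarrow> U i | B \<Rightarrow> B | S1 \<Rightarrow> T1 | T1 \<Rightarrow> S1 | S2 \<Rightarrow> T2 | T2 \<Rightarrow> S2
     | P j r \<Rightarrow> P (if j = 2 then 3 else if j = 3 then 2 else j) (3 - r))"

lemma sig_edge: "1 \<le> n \<Longrightarrow> (a,b) \<in> Fk_edges (2*n+1) \<Longrightarrow> Fk_adj (2*n+1) (sig n a) (sig n b)"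
  apply (drule edge_cases)
  apply (elim disjE exE conjE bexE)
  apply (simp_all add: sig_def adj_U adj_V)
  apply (auto simp: Fk_adj_def Fk_edges_def path_ends_def)
  done

lemma tau_edge: "1 \<le> n \<Longrightarrow> (a,b) \<in> Fk_edges (2*n+1) \<Longrightarrow> Fk_adj (2*n+1) (tau a) (tau b)"
  apply (drule edge_cases)
  apply (elim disjE exE conjE bexE)
  apply (simp_all add: tau_def adj_U adj_V)
  apply (auto simp: Fk_adj_def Fk_edges_def path_ends_def)
  done
lemma sig_V: "\<forall>a\<in>Fk_verts (2*n+1). sig n a \<in> Fk_verts (2*n+1)"
  unfolding Fk_verts_def sig_def by auto
lemma sig_inv: "\<forall>a\<in>Fk_verts (2*n+1). sig n (sig n a) = a"
  unfolding Fk_verts_def sig_def by auto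
lemma tau_V: "\<forall>a\<in>Fk_verts (2*n+1). tau a \<in> Fk_verts (2*n+1)"
  unfolding Fk_verts_def tau_def by auto
lemma tau_inv: "\<forall>a\<in>Fk_verts (2*n+1). tau (tau a) = a"
  unfolding Fk_verts_def tau_def by auto

lemma sig_hom: "1 \<le> n \<Longrightarrow> \<forall>a b. Fk_adj (2*n+1) a b \<longrightarrow> Fk_adj (2*n+1) (sig n a) (sig n b)"
proof (intro allI impI)
  fix a b assume n: "1 \<le> n" and ab: "Fk_adj (2*n+1) a b"
  then consider "(a,b) \<in> Fk_edges (2*n+1)" | "(b,a) \<in> Fk_edges (2*n+1)" unfolding Fk_adj_def by blast
  then show "Fk_adj (2*n+1) (sig n a) (sig n b)"
  proof cases
    case 1 then show ?thesis using sig_edge[OF n] by blast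
  next
    case 2 then have "Fk_adj (2*n+1) (sig n b) (sig n a)" using sig_edge[OF n] by blast
    then show ?thesis unfolding Fk_adj_def by blast
  qed
qed
lemma tau_hom: "1 \<le> n \<Longrightarrow> \<forall>a b. Fk_adj (2*n+1) a b \<longrightarrow> Fk_adj (2*n+1) (tau a) (tau b)"
proof (intro allI impI)
  fix a b assume n: "1 \<le> n" and ab: "Fk_adj (2*n+1) a b"
  then consider "(a,b) \<in> Fk_edges (2*n+1)" | "(b,a) \<in> Fk_edges (2*n+1)" unfolding Fk_adj_def by blast
  then show "Fk_adj (2*n+1) (tau a) (tau b)"
  proof cases
    case 1 then show ?thesis using tau_edge[OF n] by blast
  next
    case 2 then have "Fk_adj (2*n+1) (tau b) (tau a)" using tau_edge[OF n] by blast
    then show ?thesis unfolding Fk_adj_def by blast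
  qed
qed

lemma gsig: "1 \<le> n \<Longrightarrow> x \<in> Fk_verts (2*n+1) \<Longrightarrow> geo_from (Fk_verts (2*n+1)) (Fk_adj (2*n+1)) x
  \<Longrightarrow> geo_from (Fk_verts (2*n+1)) (Fk_adj (2*n+1)) (sig n x)"
  by (rule geo_from_auto[OF sig_V sig_inv sig_hom])
lemma gtau: "1 \<le> n \<Longrightarrow> x \<in> Fk_verts (2*n+1) \<Longrightarrow> geo_from (Fk_verts (2*n+1)) (Fk_adj (2*n+1)) x
  \<Longrightarrow> geo_from (Fk_verts (2*n+1)) (Fk_adj (2*n+1)) (tau x)"
  by (rule geo_from_auto[OF tau_V tau_inv tau_hom])

lemma geodetic_iff: "geodetic VS E \<longleftrightarrow> (\<forall>x\<in>VS. geo_from VS E x)"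
  unfolding geodetic_def geo_from_def by simp

lemma all_geo:
  assumes n: "1 \<le> n"
  shows "\<forall>x\<in>Fk_verts (2*n+1). geo_from (Fk_verts (2*n+1)) (Fk_adj (2*n+1)) x"
proof
  let ?VS = "Fk_verts (2*n+1)" and ?E = "Fk_adj (2*n+1)"
  have k1: "1 \<le> 2*n+1" by simp
  have UV: "U a \<in> ?VS" if "1 \<le> a" "a \<le> 2*n+1" for a using that unfolding Fk_verts_def by blast
  have S: "geo_from ?VS ?E (sig n x)" if "x \<in> ?VS" "geo_from ?VS ?E x" for x
    using gsig[OF n that] .
  have T: "geo_from ?VS ?E (tau x)" if "x \<in> ?VS" "geo_from ?VS ?E x" for x
    using gtau[OF n that] .
  have GU0: "geo_from ?VS ?E (U a)" if a: "1 \<le> a" "a \<le> n+1" for a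
  proof (rule geo_from_FkI[OF k1 _ _ locU[OF n a]])
    show "U a \<in> ?VS" using UV a by simp
    show "DU n a (U a) = 0" by (simp add: DU_def cdi_def)
  qed
  have GU: "geo_from ?VS ?E (U a)" if a: "1 \<le> a" "a \<le> 2*n+1" for a
  proof (cases "a \<le> n+1")
    case True then show ?thesis using GU0 a by simp
  next
    case False
    then have a2: "1 \<le> 2*n+2-a" "2*n+2-a \<le> n+1" using a by auto
    have "geo_from ?VS ?E (sig n (U (2*n+2-a)))"
      using S[OF UV GU0[OF a2]] a2 by simp
    moreover have "sig n (U (2*n+2-a)) = U a" using a by (simp add: sig_def)
    ultimately show ?thesis by simp
  qed
  have inV: "U 1 \<in> ?VS" "B \<in> ?VS" "S1 \<in> ?VS" "S2 \<in> ?VS" "P 1 1 \<in> ?VS" "P 2 1 \<in> ?VS"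
    "P 4 1 \<in> ?VS" "P 3 1 \<in> ?VS" by (auto simp: Fk_verts_def)
  have GB: "geo_from ?VS ?E B"
    by (rule geo_from_FkI[OF k1 inV(2) _ locB[OF n]]) (simp add: DB_def)
  have GS1: "geo_from ?VS ?E S1"
    by (rule geo_from_FkI[OF k1 inV(3) _ locS1[OF n]]) (simp add: DS1_def)
  have GP11: "geo_from ?VS ?E (P 1 1)"
    by (rule geo_from_FkI[OF k1 inV(5) _ locP11[OF n]]) (simp add: DP11_def)
  have GP21: "geo_from ?VS ?E (P 2 1)"
    by (rule geo_from_FkI[OF k1 inV(6) _ locP21[OF n]]) (simp add: DP21_def)
  have GS2: "geo_from ?VS ?E S2" using S[OF inV(3) GS1] by (simp add: sig_def)
  have GP31: "geo_from ?VS ?E (P 3 1)" using S[OF inV(6) GP21] by (simp add: sig_def)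
  have GP41: "geo_from ?VS ?E (P 4 1)" using S[OF inV(5) GP11] by (simp add: sig_def)
  fix x assume "x \<in> ?VS"
  then show "geo_from ?VS ?E x"
  proof (rule VS_cases)
    fix j assume j: "1 \<le> j" "j \<le> 2*n+1" then show "geo_from ?VS ?E (U j)" by (rule GU)
  next
    fix j assume j: "1 \<le> j" "j \<le> 2*n+1"
    have "geo_from ?VS ?E (tau (U j))" by (rule T[OF UV[OF j] GU[OF j]])
    then show "geo_from ?VS ?E (V j)" by (simp add: tau_def)
  next
    show "geo_from ?VS ?E B" by (rule GB)
  next
    show "geo_from ?VS ?E S1" by (rule GS1)
  next
    show "geo_from ?VS ?E S2" by (rule GS2)
  next
    show "geo_from ?VS ?E T1" using T[OF inV(3) GS1] by (simp add: tau_def)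
  next
    show "geo_from ?VS ?E T2" using T[OF inV(4) GS2] by (simp add: tau_def)
  next
    show "geo_from ?VS ?E (P 1 1)" by (rule GP11)
  next
    show "geo_from ?VS ?E (P 1 2)" using T[OF inV(5) GP11] by (simp add: tau_def)
  next
    show "geo_from ?VS ?E (P 2 1)" by (rule GP21)
  next
    show "geo_from ?VS ?E (P 2 2)" using T[OF inV(8) GP31] by (simp add: tau_def)
  next
    show "geo_from ?VS ?E (P 3 1)" by (rule GP31)
  next
    show "geo_from ?VS ?E (P 3 2)" using T[OF inV(6) GP21] by (simp add: tau_def)
  next
    show "geo_from ?VS ?E (P 4 1)" by (rule GP41)
  next
    show "geo_from ?VS ?E (P 4 2)" using T[OF inV(7) GP41] by (simp add: tau_def)
  qed
qed

theorem proposition4: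
  fixes k :: nat
  assumes "odd k" and "k \<ge> 3"
  shows "geodetic (Fk_verts k) (Fk_adj k)"
proof -
  obtain n where k: "k = 2*n+1" using assms(1) oddE by blast
  have n: "1 \<le> n" using assms(2) k by simp
  have "geodetic (Fk_verts (2*n+1)) (Fk_adj (2*n+1))"
    unfolding geodetic_iff using all_geo[OF n] .
  then show ?thesis using k by simp
qed

end
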